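(* Let $P$ be a finite poset. Then $N_{diag}(S_N(P))=A(P)$.
   Context: For a poset $P$, $x\prec y$ means $x<y$ with no $z$ satisfying $x<z<y$; $\mathrm{Diag}(P)$ is the set of covering pairs $(x,y)$, and $\mathrm{Inc}(P)$ the set of pairs of incomparable elements. Four elements $a,b,c,d$ form an $N$ in $P$ if $b\prec c$, $a\prec c$, $b\prec d$ and $(a,d)\in\mathrm{Inc}(P)$; $(b,c)$ is the diagonal edge of this $N$. $N_{diag}(P)$ is the set of diagonal edges of all $N$'s in $P$. $S_N(P)$ is the poset obtained from $P$ by adding one new (dummy) vertex $u$ on each edge $(b,c)\in N_{diag}(P)$ (so that $b\prec u\prec c$), with the induced order. $A(P)$ is the set of pairs $(b,c)\in\mathrm{Diag}(P)\setminus N_{diag}(P)$ for which there exist $a,d\in P$ with $a<c$, $b<d$, $(a,b),(c,d)\in\mathrm{Inc}(P)$, and either $(a,c)\in N_{diag}(P)$ or $(b,d)\in N_{diag}(P)$. *)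

theory Defs
  imports Main
begin

definition poset_on :: "'a set \<Rightarrow> ('a \<Rightarrow> 'a \<Rightarrow> bool) \<Rightarrow> bool" where
  "poset_on V le \<longleftrightarrow>
     (\<forall>x\<in>V. le x x) \<and>
     (\<forall>x\<in>V. \<forall>y\<in>V. le x y \<and> le y x \<longrightarrow> x = y) \<and>
     (\<forall>x\<in>V. \<forall>y\<in>V. \<forall>z\<in>V. le x y \<and> le y z \<longrightarrow> le x z)"

definition lt :: "('a \<Rightarrow> 'a \<Rightarrow> bool) \<Rightarrow> 'a \<Rightarrow> 'a \<Rightarrow> bool" where
  "lt le x y \<longleftrightarrow> le x y \<and> x \<noteq> y"

definition covers :: "'a set \<Rightarrow> ('a \<Rightarrow> 'a \<Rightarrow> bool) \<Rightarrow> 'a \<Rightarrow> 'a \<Rightarrow> bool" where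
  "covers V le x y \<longleftrightarrow> x \<in> V \<and> y \<in> V \<and> lt le x y \<and>
     \<not> (\<exists>z\<in>V. lt le x z \<and> lt le z y)"

definition Diag :: "'a set \<Rightarrow> ('a \<Rightarrow> 'a \<Rightarrow> bool) \<Rightarrow> ('a \<times> 'a) set" where
  "Diag V le = {(x, y). covers V le x y}"

definition Inc :: "'a set \<Rightarrow> ('a \<Rightarrow> 'a \<Rightarrow> bool) \<Rightarrow> ('a \<times> 'a) set" where
  "Inc V le = {(x, y). x \<in> V \<and> y \<in> V \<and> \<not> le x y \<and> \<not> le y x}"

definition is_N :: "'a set \<Rightarrow> ('a \<Rightarrow> 'a \<Rightarrow> bool) \<Rightarrow> 'a \<Rightarrow> 'a \<Rightarrow> 'a \<Rightarrow> 'a \<Rightarrow> bool" where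
  "is_N V le a b c d \<longleftrightarrow> covers V le b c \<and> covers V le a c \<and> covers V le b d \<and>
     (a, d) \<in> Inc V le"

definition Ndiag :: "'a set \<Rightarrow> ('a \<Rightarrow> 'a \<Rightarrow> bool) \<Rightarrow> ('a \<times> 'a) set" where
  "Ndiag V le = {(b, c). \<exists>a d. is_N V le a b c d}"

text \<open>S_N(P): original elements are Inl x, the dummy vertex on the edge (b,c) is Inr (b,c).
  The order is the order generated by the order of P together with b < u < c.\<close>

definition SN_carrier :: "'a set \<Rightarrow> ('a \<Rightarrow> 'a \<Rightarrow> bool) \<Rightarrow> ('a + 'a \<times> 'a) set" where
  "SN_carrier V le = Inl ` V \<union> Inr ` Ndiag V le"

definition SN_gen :: "'a set \<Rightarrow> ('a \<Rightarrow> 'a \<Rightarrow> bool) \<Rightarrow> ('a + 'a \<times> 'a) \<Rightarrow> ('a + 'a \<times> 'a) \<Rightarrow> bool" where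
  "SN_gen V le x y \<longleftrightarrow>
     (\<exists>a\<in>V. \<exists>b\<in>V. le a b \<and> x = Inl a \<and> y = Inl b) \<or>
     (\<exists>b c. (b, c) \<in> Ndiag V le \<and> x = Inl b \<and> y = Inr (b, c)) \<or>
     (\<exists>b c. (b, c) \<in> Ndiag V le \<and> x = Inr (b, c) \<and> y = Inl c)"

definition SN_le :: "'a set \<Rightarrow> ('a \<Rightarrow> 'a \<Rightarrow> bool) \<Rightarrow> ('a + 'a \<times> 'a) \<Rightarrow> ('a + 'a \<times> 'a) \<Rightarrow> bool" where
  "SN_le V le = (SN_gen V le)\<^sup>*\<^sup>*"

definition A_set :: "'a set \<Rightarrow> ('a \<Rightarrow> 'a \<Rightarrow> bool) \<Rightarrow> ('a \<times> 'a) set" where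
  "A_set V le = {(b, c). (b, c) \<in> Diag V le - Ndiag V le \<and>
     (\<exists>a\<in>V. \<exists>d\<in>V. lt le a c \<and> lt le b d \<and> (a, b) \<in> Inc V le \<and> (c, d) \<in> Inc V le \<and>
        ((a, c) \<in> Ndiag V le \<or> (b, d) \<in> Ndiag V le))}"

end

theory Submission
  imports Defs
begin

lemma po_refl: "poset_on V le \<Longrightarrow> x \<in> V \<Longrightarrow> le x x"
  unfolding poset_on_def by blast
lemma po_antisym: "poset_on V le \<Longrightarrow> x \<in> V \<Longrightarrow> y \<in> V \<Longrightarrow> le x y \<Longrightarrow> le y x \<Longrightarrow> x = y"
  unfolding poset_on_def by blast
lemma po_trans: "poset_on V le \<Longrightarrow> x \<in> V \<Longrightarrow> y \<in> V \<Longrightarrow> z \<in> V \<Longrightarrow> le x y \<Longrightarrow> le y z \<Longrightarrow> le x z"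
  unfolding poset_on_def by blast

lemma Ndiag_covers: "(b, c) \<in> Ndiag V le \<Longrightarrow> covers V le b c"
  unfolding Ndiag_def is_N_def by auto

lemma Ndiag_props: "(b, c) \<in> Ndiag V le \<Longrightarrow> b \<in> V \<and> c \<in> V \<and> le b c \<and> b \<noteq> c"
  using Ndiag_covers unfolding covers_def lt_def by fastforce

lemma SN_carrier_simps[simp]:
  "Inl x \<in> SN_carrier V le \<longleftrightarrow> x \<in> V"
  "Inr p \<in> SN_carrier V le \<longleftrightarrow> p \<in> Ndiag V le"
  unfolding SN_carrier_def by auto

fun R :: "'a set \<Rightarrow> ('a \<Rightarrow> 'a \<Rightarrow> bool) \<Rightarrow> ('a + 'a \<times> 'a) \<Rightarrow> ('a + 'a \<times> 'a) \<Rightarrow> bool" where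
  "R V le (Inl a) (Inl b) = (a = b \<or> (a \<in> V \<and> b \<in> V \<and> le a b))"
| "R V le (Inl a) (Inr (b, c)) = (a \<in> V \<and> (b, c) \<in> Ndiag V le \<and> le a b)"
| "R V le (Inr (b, c)) (Inl d) = (d \<in> V \<and> (b, c) \<in> Ndiag V le \<and> le c d)"
| "R V le (Inr (b, c)) (Inr (b', c')) = ((b = b' \<and> c = c') \<or> ((b, c) \<in> Ndiag V le \<and> (b', c') \<in> Ndiag V le \<and> le c b'))"

lemma SN_le_R:
  assumes po: "poset_on V le"
  shows "SN_le V le x y \<longleftrightarrow> R V le x y"
proof
  assume "SN_le V le x y"
  then show "R V le x y" unfolding SN_le_def
  proof (induction rule: rtranclp_induct)
    case base
    then show ?case by (cases x) auto
  next
    case (step y z)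
    have NP: "\<And>b c. (b, c) \<in> Ndiag V le \<Longrightarrow> b \<in> V \<and> c \<in> V \<and> le b c"
      using Ndiag_props by fastforce
    have T: "\<And>x y z. x \<in> V \<Longrightarrow> y \<in> V \<Longrightarrow> z \<in> V \<Longrightarrow> le x y \<Longrightarrow> le y z \<Longrightarrow> le x z"
      using po_trans[OF po] by blast
    have RF: "\<And>x. x \<in> V \<Longrightarrow> le x x" using po_refl[OF po] by blast
    from step.hyps(2) consider
      (g1) a b where "a \<in> V" "b \<in> V" "le a b" "y = Inl a" "z = Inl b"
    | (g2) b c where "(b, c) \<in> Ndiag V le" "y = Inl b" "z = Inr (b, c)"
    | (g3) b c where "(b, c) \<in> Ndiag V le" "y = Inr (b, c)" "z = Inl c"
      unfolding SN_gen_def by blast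
    then show ?case
    proof cases
      case g1
      then show ?thesis using step.IH
        apply (cases x) apply (auto intro: RF dest: NP) by (metis NP T RF)+
    next
      case g2
      then show ?thesis using step.IH
        by (cases x) (auto intro: RF dest: NP)
    next
      case g3
      then show ?thesis using step.IH
        apply (cases x) apply (auto intro: RF dest: NP) by (metis NP T RF)+
    qed
  qed
next
  have g1: "SN_le V le (Inl a) (Inl b)" if "a \<in> V" "b \<in> V" "le a b" for a b
    unfolding SN_le_def using that by (intro r_into_rtranclp) (auto simp: SN_gen_def)
  have g2: "SN_le V le (Inl b) (Inr (b, c))" if "(b, c) \<in> Ndiag V le" for b c
    unfolding SN_le_def using that by (intro r_into_rtranclp) (auto simp: SN_gen_def)
  have g3: "SN_le V le (Inr (b, c)) (Inl c)" if "(b, c) \<in> Ndiag V le" for b c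
    unfolding SN_le_def using that by (intro r_into_rtranclp) (auto simp: SN_gen_def)
  have tr: "SN_le V le x z" if "SN_le V le x y" "SN_le V le y z" for x y z
    using that unfolding SN_le_def by simp
  assume "R V le x y"
  then show "SN_le V le x y"
  proof (cases x; cases y)
    fix a b assume "x = Inl a" "y = Inl b" "R V le x y"
    then show ?thesis using g1 by (auto simp: SN_le_def)
  next
    fix a q assume h: "x = Inl a" "y = Inr q" "R V le x y"
    obtain b c where q: "q = (b, c)" by fastforce
    have "a \<in> V" "(b, c) \<in> Ndiag V le" "le a b" using h q by auto
    moreover have "b \<in> V" using Ndiag_props[OF \<open>(b, c) \<in> Ndiag V le\<close>] by simp
    ultimately show ?thesis using h q tr[OF g1 g2] by simp
  next
    fix p d assume h: "x = Inr p" "y = Inl d" "R V le x y"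
    obtain b c where p: "p = (b, c)" by fastforce
    have "d \<in> V" "(b, c) \<in> Ndiag V le" "le c d" using h p by auto
    moreover have "c \<in> V" using Ndiag_props[OF \<open>(b, c) \<in> Ndiag V le\<close>] by simp
    ultimately show ?thesis using h p tr[OF g3 g1] by simp
  next
    fix p q assume h: "x = Inr p" "y = Inr q" "R V le x y"
    obtain b c where p: "p = (b, c)" by fastforce
    obtain b' c' where q: "q = (b', c')" by fastforce
    show ?thesis
    proof (cases "p = q")
      case True then show ?thesis using h unfolding SN_le_def by simp
    next
      case False
      then have "(b, c) \<in> Ndiag V le" "(b', c') \<in> Ndiag V le" "le c b'" using h p q by auto
      moreover have "c \<in> V" "b' \<in> V" using Ndiag_props[OF \<open>(b, c) \<in> Ndiag V le\<close>]
          Ndiag_props[OF \<open>(b', c') \<in> Ndiag V le\<close>] by simp_all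
      ultimately show ?thesis using h p q tr[OF g3 tr[OF g1 g2]] by simp
    qed
  qed
qed

lemma SN_le_simps:
  assumes po: "poset_on V le"
  shows
  "SN_le V le (Inl a) (Inl b) \<longleftrightarrow> a = b \<or> (a \<in> V \<and> b \<in> V \<and> le a b)"
  "SN_le V le (Inl a) (Inr (b, c)) \<longleftrightarrow> a \<in> V \<and> (b, c) \<in> Ndiag V le \<and> le a b"
  "SN_le V le (Inr (b, c)) (Inl d) \<longleftrightarrow> d \<in> V \<and> (b, c) \<in> Ndiag V le \<and> le c d"
  "SN_le V le (Inr (b, c)) (Inr (b', c')) \<longleftrightarrow> (b = b' \<and> c = c') \<or> ((b, c) \<in> Ndiag V le \<and> (b', c') \<in> Ndiag V le \<and> le c b')"
  unfolding SN_le_R[OF po] by auto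

lemma exists_cover_above:
  assumes fin: "finite V" and po: "poset_on V le"
  shows "b \<in> V \<Longrightarrow> d \<in> V \<Longrightarrow> lt le b d \<Longrightarrow> \<exists>d0. covers V le b d0 \<and> le d0 d"
proof (induction "card {z\<in>V. lt le b z \<and> le z d}" arbitrary: d rule: less_induct)
  case (less d)
  show ?case
  proof (cases "covers V le b d")
    case True
    then show ?thesis using po_refl[OF po] less.prems by blast
  next
    case False
    then obtain z where z: "z \<in> V" "lt le b z" "lt le z d"
      using less.prems unfolding covers_def by blast
    have sub: "{w\<in>V. lt le b w \<and> le w z} \<subset> {w\<in>V. lt le b w \<and> le w d}"
    proof
      show "{w\<in>V. lt le b w \<and> le w z} \<subseteq> {w\<in>V. lt le b w \<and> le w d}"
        using z less.prems po_trans[OF po] unfolding lt_def by blast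
      have "d \<in> {w\<in>V. lt le b w \<and> le w d}" using less.prems po_refl[OF po] by blast
      moreover have "d \<notin> {w\<in>V. lt le b w \<and> le w z}"
        using z less.prems po_antisym[OF po] unfolding lt_def by blast
      ultimately show "{w\<in>V. lt le b w \<and> le w z} \<noteq> {w\<in>V. lt le b w \<and> le w d}" by blast
    qed
    have "card {w\<in>V. lt le b w \<and> le w z} < card {w\<in>V. lt le b w \<and> le w d}"
      using psubset_card_mono[OF _ sub] fin by simp
    from less.hyps[OF this less.prems(1) z(1) z(2)] obtain d0 where
      "covers V le b d0" "le d0 z" by blast
    moreover have "d0 \<in> V" using \<open>covers V le b d0\<close> unfolding covers_def by blast
    ultimately show ?thesis using po_trans[OF po, of d0 z d] z less.prems unfolding lt_def by blast
  qed
qed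

lemma exists_cover_below:
  assumes fin: "finite V" and po: "poset_on V le"
    and "a \<in> V" "c \<in> V" "lt le a c"
  shows "\<exists>a0. covers V le a0 c \<and> le a a0"
proof -
  have po': "poset_on V (\<lambda>x y. le y x)" using po unfolding poset_on_def by blast
  have cv: "covers V (\<lambda>x y. le y x) x y \<longleftrightarrow> covers V le y x" for x y
    unfolding covers_def lt_def by blast
  have "lt (\<lambda>x y. le y x) c a" using assms(5) unfolding lt_def by blast
  from exists_cover_above[OF fin po' assms(4) assms(3) this] show ?thesis
    unfolding cv by blast
qed

lemma C1:
  assumes po: "poset_on V le"
  shows "covers (SN_carrier V le) (SN_le V le) (Inl x) (Inl y) \<longleftrightarrow>
    covers V le x y \<and> (x, y) \<notin> Ndiag V le"
proof
  assume cv: "covers (SN_carrier V le) (SN_le V le) (Inl x) (Inl y)"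
  then have xy: "x \<in> V" "y \<in> V" "le x y" "x \<noteq> y"
    unfolding covers_def lt_def SN_le_simps[OF po] by auto
  have "\<not> (\<exists>z\<in>V. lt le x z \<and> lt le z y)"
  proof
    assume "\<exists>z\<in>V. lt le x z \<and> lt le z y"
    then obtain z where "z \<in> V" "lt le x z" "lt le z y" by blast
    then have "Inl z \<in> SN_carrier V le \<and> lt (SN_le V le) (Inl x) (Inl z) \<and> lt (SN_le V le) (Inl z) (Inl y)"
      using xy unfolding lt_def SN_le_simps[OF po] by auto
    then show False using cv unfolding covers_def by blast
  qed
  moreover have "(x, y) \<notin> Ndiag V le"
  proof
    assume N: "(x, y) \<in> Ndiag V le"
    then have "Inr (x, y) \<in> SN_carrier V le \<and> lt (SN_le V le) (Inl x) (Inr (x, y)) \<and> lt (SN_le V le) (Inr (x, y)) (Inl y)"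
      using xy po_refl[OF po] unfolding lt_def SN_le_simps[OF po] by auto
    then show False using cv unfolding covers_def by blast
  qed
  ultimately show "covers V le x y \<and> (x, y) \<notin> Ndiag V le"
    using xy unfolding covers_def lt_def by blast
next
  assume h: "covers V le x y \<and> (x, y) \<notin> Ndiag V le"
  then have xy: "x \<in> V" "y \<in> V" "le x y" "x \<noteq> y"
    and nb: "\<And>z. z \<in> V \<Longrightarrow> lt le x z \<Longrightarrow> lt le z y \<Longrightarrow> False"
    and nN: "(x, y) \<notin> Ndiag V le"
    unfolding covers_def lt_def by auto
  have "\<not> (\<exists>z\<in>SN_carrier V le. lt (SN_le V le) (Inl x) z \<and> lt (SN_le V le) z (Inl y))"
  proof
    assume "\<exists>z\<in>SN_carrier V le. lt (SN_le V le) (Inl x) z \<and> lt (SN_le V le) z (Inl y)"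
    then obtain z where z: "z \<in> SN_carrier V le" "lt (SN_le V le) (Inl x) z" "lt (SN_le V le) z (Inl y)"
      by blast
    show False
    proof (cases z)
      case (Inl w)
      then have "w \<in> V" "lt le x w" "lt le w y" using z by (auto simp: lt_def SN_le_simps[OF po])
      then show False using nb by blast
    next
      case (Inr p)
      obtain b c where p: "p = (b, c)" by fastforce
      have bc: "(b, c) \<in> Ndiag V le" "le x b" "le c y"
        using z Inr p by (auto simp: lt_def SN_le_simps[OF po])
      have bcV: "b \<in> V" "c \<in> V" "le b c" "b \<noteq> c" using Ndiag_props[OF bc(1)] by auto
      have "x = b"
      proof (rule ccontr)
        assume "x \<noteq> b"
        moreover have "le b y" using po_trans[OF po, of b c y] bcV bc xy by blast
        moreover have "b \<noteq> y" using po_antisym[OF po, of b c] bcV bc by blast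
        ultimately show False using nb[of b] bcV bc unfolding lt_def by blast
      qed
      moreover have "c = y"
      proof (rule ccontr)
        assume "c \<noteq> y"
        moreover have "le x c" using po_trans[OF po, of x b c] bcV bc xy by blast
        moreover have "x \<noteq> c" using po_antisym[OF po, of b c] bcV bc \<open>x = b\<close> by blast
        ultimately show False using nb[of c] bcV bc unfolding lt_def by blast
      qed
      ultimately show False using nN bc by simp
    qed
  qed
  then show "covers (SN_carrier V le) (SN_le V le) (Inl x) (Inl y)"
    using xy unfolding covers_def lt_def SN_le_simps[OF po] by auto
qed

lemma C2:
  assumes po: "poset_on V le"
  shows "covers (SN_carrier V le) (SN_le V le) (Inl x) (Inr (b, c)) \<longleftrightarrow>
    (b, c) \<in> Ndiag V le \<and> x = b"
proof
  assume cv: "covers (SN_carrier V le) (SN_le V le) (Inl x) (Inr (b, c))"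
  then have h: "x \<in> V" "(b, c) \<in> Ndiag V le" "le x b"
    unfolding covers_def lt_def SN_le_simps[OF po] by auto
  have bcV: "b \<in> V" "c \<in> V" "le b c" "b \<noteq> c" using Ndiag_props[OF h(2)] by auto
  have "x = b"
  proof (rule ccontr)
    assume "x \<noteq> b"
    then have "Inl b \<in> SN_carrier V le \<and> lt (SN_le V le) (Inl x) (Inl b) \<and> lt (SN_le V le) (Inl b) (Inr (b, c))"
      using h bcV po_refl[OF po] unfolding lt_def SN_le_simps[OF po] by auto
    then show False using cv unfolding covers_def by blast
  qed
  then show "(b, c) \<in> Ndiag V le \<and> x = b" using h by blast
next
  assume h: "(b, c) \<in> Ndiag V le \<and> x = b"
  have bcV: "b \<in> V" "c \<in> V" "le b c" "b \<noteq> c" using Ndiag_props[OF conjunct1[OF h]] by auto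
  have "\<not> (\<exists>z\<in>SN_carrier V le. lt (SN_le V le) (Inl b) z \<and> lt (SN_le V le) z (Inr (b, c)))"
  proof
    assume "\<exists>z\<in>SN_carrier V le. lt (SN_le V le) (Inl b) z \<and> lt (SN_le V le) z (Inr (b, c))"
    then obtain z where z: "z \<in> SN_carrier V le" "lt (SN_le V le) (Inl b) z" "lt (SN_le V le) z (Inr (b, c))"
      by blast
    show False
    proof (cases z)
      case (Inl w)
      then have "w \<in> V" "le b w" "le w b" "w \<noteq> b" using z by (auto simp: lt_def SN_le_simps[OF po])
      then show False using po_antisym[OF po] bcV by blast
    next
      case (Inr p)
      obtain b' c' where p: "p = (b', c')" by fastforce
      have bc: "(b', c') \<in> Ndiag V le" "le b b'" "le c' b"
        using z Inr p by (auto simp: lt_def SN_le_simps[OF po])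
      have "b' \<in> V" "c' \<in> V" "le b' c'" "b' \<noteq> c'" using Ndiag_props[OF bc(1)] by auto
      then show False using bc bcV po_trans[OF po, of c' b b'] po_antisym[OF po, of b' c'] by blast
    qed
  qed
  then show "covers (SN_carrier V le) (SN_le V le) (Inl x) (Inr (b, c))"
    using h bcV po_refl[OF po] unfolding covers_def lt_def SN_le_simps[OF po] by auto
qed

lemma C3:
  assumes po: "poset_on V le"
  shows "covers (SN_carrier V le) (SN_le V le) (Inr (b, c)) (Inl y) \<longleftrightarrow>
    (b, c) \<in> Ndiag V le \<and> y = c"
proof
  assume cv: "covers (SN_carrier V le) (SN_le V le) (Inr (b, c)) (Inl y)"
  then have h: "y \<in> V" "(b, c) \<in> Ndiag V le" "le c y"
    unfolding covers_def lt_def SN_le_simps[OF po] by auto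
  have bcV: "b \<in> V" "c \<in> V" "le b c" "b \<noteq> c" using Ndiag_props[OF h(2)] by auto
  have "y = c"
  proof (rule ccontr)
    assume "y \<noteq> c"
    then have "Inl c \<in> SN_carrier V le \<and> lt (SN_le V le) (Inr (b, c)) (Inl c) \<and> lt (SN_le V le) (Inl c) (Inl y)"
      using h bcV po_refl[OF po] unfolding lt_def SN_le_simps[OF po] by auto
    then show False using cv unfolding covers_def by blast
  qed
  then show "(b, c) \<in> Ndiag V le \<and> y = c" using h by blast
next
  assume h: "(b, c) \<in> Ndiag V le \<and> y = c"
  have bcV: "b \<in> V" "c \<in> V" "le b c" "b \<noteq> c" using Ndiag_props[OF conjunct1[OF h]] by auto
  have "\<not> (\<exists>z\<in>SN_carrier V le. lt (SN_le V le) (Inr (b, c)) z \<and> lt (SN_le V le) z (Inl c))"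
  proof
    assume "\<exists>z\<in>SN_carrier V le. lt (SN_le V le) (Inr (b, c)) z \<and> lt (SN_le V le) z (Inl c)"
    then obtain z where z: "z \<in> SN_carrier V le" "lt (SN_le V le) (Inr (b, c)) z" "lt (SN_le V le) z (Inl c)"
      by blast
    show False
    proof (cases z)
      case (Inl w)
      then have "w \<in> V" "le c w" "le w c" "w \<noteq> c" using z by (auto simp: lt_def SN_le_simps[OF po])
      then show False using po_antisym[OF po] bcV by blast
    next
      case (Inr p)
      obtain b' c' where p: "p = (b', c')" by fastforce
      have bc: "(b', c') \<in> Ndiag V le" "le c b'" "le c' c"
        using z Inr p by (auto simp: lt_def SN_le_simps[OF po])
      have "b' \<in> V" "c' \<in> V" "le b' c'" "b' \<noteq> c'" using Ndiag_props[OF bc(1)] by auto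
      then show False using bc bcV po_trans[OF po, of b' c' c] po_antisym[OF po, of b' c] po_antisym[OF po, of b' c'] by blast
    qed
  qed
  then show "covers (SN_carrier V le) (SN_le V le) (Inr (b, c)) (Inl y)"
    using h bcV po_refl[OF po] unfolding covers_def lt_def SN_le_simps[OF po] by auto
qed

lemma C4:
  assumes po: "poset_on V le"
  shows "\<not> covers (SN_carrier V le) (SN_le V le) (Inr (b, c)) (Inr (b', c'))"
proof
  assume cv: "covers (SN_carrier V le) (SN_le V le) (Inr (b, c)) (Inr (b', c'))"
  then have h: "(b, c) \<in> Ndiag V le" "(b', c') \<in> Ndiag V le" "le c b'"
    unfolding covers_def lt_def SN_le_simps[OF po] by auto
  have "c \<in> V" using Ndiag_props[OF h(1)] by auto
  then have "Inl c \<in> SN_carrier V le \<and> lt (SN_le V le) (Inr (b, c)) (Inl c) \<and> lt (SN_le V le) (Inl c) (Inr (b', c'))"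
    using h po_refl[OF po] unfolding lt_def SN_le_simps[OF po] by auto
  then show False using cv unfolding covers_def by blast
qed

lemma lower_cover_form:
  assumes po: "poset_on V le"
    and cv: "covers (SN_carrier V le) (SN_le V le) a' (Inl g)"
  shows "\<exists>a. covers V le a g \<and>
     ((a' = Inl a \<and> (a, g) \<notin> Ndiag V le) \<or> (a' = Inr (a, g) \<and> (a, g) \<in> Ndiag V le))"
proof (cases a')
  case (Inl a)
  then have "covers V le a g \<and> (a, g) \<notin> Ndiag V le" using cv C1[OF po] by simp
  then show ?thesis using Inl by (intro exI[of _ a]) simp
next
  case (Inr p)
  obtain b c where p: "p = (b, c)" by fastforce
  then have h: "(b, c) \<in> Ndiag V le" "g = c" using cv Inr C3[OF po] by auto
  then show ?thesis using Inr p Ndiag_covers[OF h(1)] by (intro exI[of _ b]) simp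
qed

lemma upper_cover_form:
  assumes po: "poset_on V le"
    and cv: "covers (SN_carrier V le) (SN_le V le) (Inl b) d'"
  shows "\<exists>d. covers V le b d \<and>
     ((d' = Inl d \<and> (b, d) \<notin> Ndiag V le) \<or> (d' = Inr (b, d) \<and> (b, d) \<in> Ndiag V le))"
proof (cases d')
  case (Inl d)
  then have "covers V le b d \<and> (b, d) \<notin> Ndiag V le" using cv C1[OF po] by simp
  then show ?thesis using Inl by (intro exI[of _ d]) simp
next
  case (Inr p)
  obtain b' c where p: "p = (b', c)" by fastforce
  then have h: "(b', c) \<in> Ndiag V le" "b = b'" using cv Inr C2[OF po] by auto
  then show ?thesis using Inr p Ndiag_covers[OF h(1)] by (intro exI[of _ c]) simp
qed

lemma covers_le: "covers V le x y \<Longrightarrow> x \<in> V \<and> y \<in> V \<and> le x y \<and> x \<noteq> y"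
  unfolding covers_def lt_def by blast

lemma sub1:
  assumes po: "poset_on V le"
    and N: "(x, y) \<in> Ndiag (SN_carrier V le) (SN_le V le)"
  shows "(x, y) \<in> (\<lambda>(b, c). (Inl b, Inl c)) ` A_set V le"
proof -
  let ?W = "SN_carrier V le" and ?L = "SN_le V le"
  obtain a' d' where "is_N ?W ?L a' x y d'" using N unfolding Ndiag_def by blast
  then have cx: "covers ?W ?L x y" and ca: "covers ?W ?L a' y" and cd: "covers ?W ?L x d'"
    and inc: "a' \<in> ?W" "d' \<in> ?W" "\<not> ?L a' d'" "\<not> ?L d' a'"
    unfolding is_N_def Inc_def by auto
  have cov_le: "\<And>u v. covers ?W ?L u v \<Longrightarrow> ?L u v" unfolding covers_def lt_def by blast
  obtain \<beta> where x: "x = Inl \<beta>"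
  proof (cases x)
    case (Inr p)
    obtain b c where p: "p = (b, c)" by fastforce
    have yc: "\<And>y. covers ?W ?L x y \<Longrightarrow> y = Inl c"
    proof -
      fix y assume "covers ?W ?L x y"
      then show "y = Inl c" using Inr p C3[OF po] C4[OF po] by (cases y) fastforce+
    qed
    have "y = d'" using yc[OF cx] yc[OF cd] by simp
    then show ?thesis using cov_le[OF ca] inc by simp
  qed
  obtain \<gamma> where y: "y = Inl \<gamma>"
  proof (cases y)
    case (Inr q)
    obtain b c where q: "q = (b, c)" by fastforce
    have xb: "\<And>x. covers ?W ?L x y \<Longrightarrow> x = Inl b"
    proof -
      fix x assume "covers ?W ?L x y"
      then show "x = Inl b" using Inr q C2[OF po] C4[OF po] by (cases x) fastforce+
    qed
    have "a' = x" using xb[OF cx] xb[OF ca] by simp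
    then show ?thesis using cov_le[OF cd] inc by simp
  qed
  have bg: "covers V le \<beta> \<gamma>" "(\<beta>, \<gamma>) \<notin> Ndiag V le" using cx x y C1[OF po] by auto
  obtain \<alpha> where ag: "covers V le \<alpha> \<gamma>"
    and aform: "(a' = Inl \<alpha> \<and> (\<alpha>, \<gamma>) \<notin> Ndiag V le) \<or> (a' = Inr (\<alpha>, \<gamma>) \<and> (\<alpha>, \<gamma>) \<in> Ndiag V le)"
    using lower_cover_form[OF po] ca y by blast
  obtain \<delta> where bd: "covers V le \<beta> \<delta>"
    and dform: "(d' = Inl \<delta> \<and> (\<beta>, \<delta>) \<notin> Ndiag V le) \<or> (d' = Inr (\<beta>, \<delta>) \<and> (\<beta>, \<delta>) \<in> Ndiag V le)"
    using upper_cover_form[OF po] cd x by blast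
  note cl = covers_le[OF ag] covers_le[OF bg(1)] covers_le[OF bd]
  have nb: "\<And>u v w. covers V le u w \<Longrightarrow> v \<in> V \<Longrightarrow> lt le u v \<Longrightarrow> lt le v w \<Longrightarrow> False"
    unfolding covers_def by blast
  have ab: "\<alpha> \<noteq> \<beta>"
  proof
    assume "\<alpha> = \<beta>"
    then show False using aform bg(2) cov_le[OF cd] inc(3) x by auto
  qed
  have gd: "\<gamma> \<noteq> \<delta>"
  proof
    assume "\<gamma> = \<delta>"
    then show False using dform bg(2) cov_le[OF ca] inc(3) y by auto
  qed
  have incab: "(\<alpha>, \<beta>) \<in> Inc V le"
  proof -
    have "\<not> le \<alpha> \<beta>" using nb[OF ag, of \<beta>] ab cl unfolding lt_def by blast
    moreover have "\<not> le \<beta> \<alpha>" using nb[OF bg(1), of \<alpha>] ab cl unfolding lt_def by blast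
    ultimately show ?thesis using cl unfolding Inc_def by blast
  qed
  have incgd: "(\<gamma>, \<delta>) \<in> Inc V le"
  proof -
    have "\<not> le \<gamma> \<delta>" using nb[OF bd, of \<gamma>] gd cl unfolding lt_def by blast
    moreover have "\<not> le \<delta> \<gamma>" using nb[OF bg(1), of \<delta>] gd cl unfolding lt_def by blast
    ultimately show ?thesis using cl unfolding Inc_def by blast
  qed
  have disj: "(\<alpha>, \<gamma>) \<in> Ndiag V le \<or> (\<beta>, \<delta>) \<in> Ndiag V le"
  proof (rule ccontr)
    assume "\<not> ?thesis"
    then have a': "a' = Inl \<alpha>" and d': "d' = Inl \<delta>" using aform dform by auto
    have "(\<alpha>, \<delta>) \<in> Inc V le" using inc a' d' cl by (auto simp: Inc_def SN_le_simps[OF po])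
    then have "is_N V le \<alpha> \<beta> \<gamma> \<delta>" using ag bg bd unfolding is_N_def by blast
    then show False using bg(2) unfolding Ndiag_def by blast
  qed
  have d1: "(\<beta>, \<gamma>) \<in> Diag V le - Ndiag V le" using bg unfolding Diag_def by simp
  have w: "\<alpha> \<in> V" "\<delta> \<in> V" "lt le \<alpha> \<gamma>" "lt le \<beta> \<delta>" using cl unfolding lt_def by auto
  have "\<exists>a\<in>V. \<exists>d\<in>V. lt le a \<gamma> \<and> lt le \<beta> d \<and> (a, \<beta>) \<in> Inc V le \<and> (\<gamma>, d) \<in> Inc V le \<and>
        ((a, \<gamma>) \<in> Ndiag V le \<or> (\<beta>, d) \<in> Ndiag V le)"
    using w incab incgd disj by blast
  with d1 have A: "(\<beta>, \<gamma>) \<in> A_set V le" unfolding A_set_def by simp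
  have E: "(x, y) = (\<lambda>(b, c). (Inl b, Inl c)) (\<beta>, \<gamma>)" using x y by simp
  show ?thesis by (rule image_eqI[where f = "\<lambda>(b, c). (Inl b, Inl c)", OF E A])
qed

lemma sub2:
  assumes fin: "finite V" and po: "poset_on V le"
    and A: "(\<beta>, \<gamma>) \<in> A_set V le"
  shows "(Inl \<beta>, Inl \<gamma>) \<in> Ndiag (SN_carrier V le) (SN_le V le)"
proof -
  let ?W = "SN_carrier V le" and ?L = "SN_le V le"
  obtain \<alpha> \<delta> where D: "(\<beta>, \<gamma>) \<in> Diag V le" "(\<beta>, \<gamma>) \<notin> Ndiag V le"
    and ad: "\<alpha> \<in> V" "\<delta> \<in> V" "lt le \<alpha> \<gamma>" "lt le \<beta> \<delta>"
    and inc1: "(\<alpha>, \<beta>) \<in> Inc V le" and inc2: "(\<gamma>, \<delta>) \<in> Inc V le"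
    and disj: "(\<alpha>, \<gamma>) \<in> Ndiag V le \<or> (\<beta>, \<delta>) \<in> Ndiag V le"
    using A unfolding A_set_def by blast
  have cbg: "covers V le \<beta> \<gamma>" using D(1) unfolding Diag_def by simp
  have V: "\<beta> \<in> V" "\<gamma> \<in> V" "le \<beta> \<gamma>" "\<beta> \<noteq> \<gamma>" using covers_le[OF cbg] by auto
  have le1: "le \<alpha> \<gamma>" "le \<beta> \<delta>" using ad unfolding lt_def by auto
  have n: "\<not> le \<alpha> \<beta>" "\<not> le \<beta> \<alpha>" "\<not> le \<gamma> \<delta>" "\<not> le \<delta> \<gamma>"
    using inc1 inc2 unfolding Inc_def by auto
  have ne: "\<alpha> \<noteq> \<beta>" "\<gamma> \<noteq> \<delta>" using n po_refl[OF po] V ad by auto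
  have ngb: "\<not> le \<gamma> \<beta>" using po_antisym[OF po, of \<beta> \<gamma>] V by blast
  have cx: "covers ?W ?L (Inl \<beta>) (Inl \<gamma>)" using C1[OF po] cbg D(2) by simp
  have "\<exists>a' d'. is_N ?W ?L a' (Inl \<beta>) (Inl \<gamma>) d'"
  proof (cases "(\<alpha>, \<gamma>) \<in> Ndiag V le")
    case True
    obtain d0 where d0: "covers V le \<beta> d0" "le d0 \<delta>"
      using exists_cover_above[OF fin po V(1) ad(2) ad(4)] by blast
    have d0V: "d0 \<in> V" "le \<beta> d0" using covers_le[OF d0(1)] by auto
    have n1: "\<not> le d0 \<alpha>" using po_trans[OF po, of \<beta> d0 \<alpha>] d0V ad V n by blast
    have n2: "\<not> le \<gamma> d0" using po_trans[OF po, of \<gamma> d0 \<delta>] d0V ad V n d0 by blast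
    have ca: "covers ?W ?L (Inr (\<alpha>, \<gamma>)) (Inl \<gamma>)" using C3[OF po] True by simp
    show ?thesis
    proof (cases "(\<beta>, d0) \<in> Ndiag V le")
      case True2: True
      have cd: "covers ?W ?L (Inl \<beta>) (Inr (\<beta>, d0))" using C2[OF po] True2 by simp
      have "(Inr (\<alpha>, \<gamma>), Inr (\<beta>, d0)) \<in> Inc ?W ?L"
        using True True2 ne ngb n1 by (auto simp: Inc_def SN_le_simps[OF po])
      then have "is_N ?W ?L (Inr (\<alpha>, \<gamma>)) (Inl \<beta>) (Inl \<gamma>) (Inr (\<beta>, d0))"
        using cx ca cd unfolding is_N_def by blast
      then show ?thesis by blast
    next
      case False2: False
      have cd: "covers ?W ?L (Inl \<beta>) (Inl d0)" using C1[OF po] False2 d0 by simp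
      have "(Inr (\<alpha>, \<gamma>), Inl d0) \<in> Inc ?W ?L"
        using True d0V n1 n2 by (auto simp: Inc_def SN_le_simps[OF po])
      then have "is_N ?W ?L (Inr (\<alpha>, \<gamma>)) (Inl \<beta>) (Inl \<gamma>) (Inl d0)"
        using cx ca cd unfolding is_N_def by blast
      then show ?thesis by blast
    qed
  next
    case False
    then have bd: "(\<beta>, \<delta>) \<in> Ndiag V le" using disj by blast
    obtain a0 where a0: "covers V le a0 \<gamma>" "le \<alpha> a0"
      using exists_cover_below[OF fin po ad(1) V(2) ad(3)] by blast
    have a0V: "a0 \<in> V" "le a0 \<gamma>" using covers_le[OF a0(1)] by auto
    have n1: "\<not> le a0 \<beta>" using po_trans[OF po, of \<alpha> a0 \<beta>] a0V ad V n a0 by blast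
    have n2: "\<not> le \<delta> a0" using po_trans[OF po, of \<delta> a0 \<gamma>] a0V ad V n by blast
    have cd: "covers ?W ?L (Inl \<beta>) (Inr (\<beta>, \<delta>))" using C2[OF po] bd by simp
    show ?thesis
    proof (cases "(a0, \<gamma>) \<in> Ndiag V le")
      case True2: True
      have ca: "covers ?W ?L (Inr (a0, \<gamma>)) (Inl \<gamma>)" using C3[OF po] True2 by simp
      have "(Inr (a0, \<gamma>), Inr (\<beta>, \<delta>)) \<in> Inc ?W ?L"
        using True2 bd ne ngb n2 by (auto simp: Inc_def SN_le_simps[OF po])
      then have "is_N ?W ?L (Inr (a0, \<gamma>)) (Inl \<beta>) (Inl \<gamma>) (Inr (\<beta>, \<delta>))"
        using cx ca cd unfolding is_N_def by blast
      then show ?thesis by blast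
    next
      case False2: False
      have ca: "covers ?W ?L (Inl a0) (Inl \<gamma>)" using C1[OF po] False2 a0 by simp
      have "(Inl a0, Inr (\<beta>, \<delta>)) \<in> Inc ?W ?L"
        using bd a0V n1 n2 by (auto simp: Inc_def SN_le_simps[OF po])
      then have "is_N ?W ?L (Inl a0) (Inl \<beta>) (Inl \<gamma>) (Inr (\<beta>, \<delta>))"
        using cx ca cd unfolding is_N_def by blast
      then show ?thesis by blast
    qed
  qed
  then show ?thesis unfolding Ndiag_def by simp
qed

theorem lemma3:
  fixes V :: "'a set" and le :: "'a \<Rightarrow> 'a \<Rightarrow> bool"
  assumes "finite V" and "poset_on V le"
  shows "Ndiag (SN_carrier V le) (SN_le V le) = (\<lambda>(b, c). (Inl b, Inl c)) ` A_set V le"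
proof
  show "Ndiag (SN_carrier V le) (SN_le V le) \<subseteq> (\<lambda>(b, c). (Inl b, Inl c)) ` A_set V le"
    using sub1[OF assms(2)] by auto
  show "(\<lambda>(b, c). (Inl b, Inl c)) ` A_set V le \<subseteq> Ndiag (SN_carrier V le) (SN_le V le)"
    using sub2[OF assms] by auto
qed

end
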